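(* Let $(X,d)$ be an infinite u.l.f. metric space. Then the Higson corona $\nu X$ has at least $2^{2^{\aleph_0}}$ elements.
   Context: A metric space is u.l.f. if for every $r>0$ the cardinalities of its balls of radius $r$ are uniformly bounded. A Higson function is a bounded $f\colon X\to\mathbb{C}$ such that for all $\varepsilon,R>0$ there is a finite $F\subseteq X$ with $|f(x)-f(y)|<\varepsilon$ whenever $x,y\in X\setminus F$ and $d(x,y)<R$. These form a unital C*-algebra $C_h(X)\subseteq\ell_\infty(X)$; its spectrum $hX$ is the Higson compactification of $X$ (containing $X$), and the Higson corona is $\nu X=hX\setminus X$. *)

theory Defs
  imports "HOL-Analysis.Analysis"
begin

text \<open>Uniformly locally finite metric space (the whole type is the space).\<close>
definition ulf :: "'a::metric_space itself \<Rightarrow> bool" where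
  "ulf _ \<longleftrightarrow> (\<forall>r>0. \<exists>N::nat. \<forall>x::'a. finite (ball x r) \<and> card (ball x r) \<le> N)"

definition higson :: "('a::metric_space \<Rightarrow> complex) \<Rightarrow> bool" where
  "higson f \<longleftrightarrow> (\<exists>B. \<forall>x. cmod (f x) \<le> B) \<and>
     (\<forall>\<epsilon>>0. \<forall>R>0. \<exists>F. finite F \<and>
        (\<forall>x y. x \<notin> F \<and> y \<notin> F \<and> dist x y < R \<longrightarrow> cmod (f x - f y) < \<epsilon>))"

text \<open>Points of the spectrum of C_h(X): characters (unital multiplicative linear functionals
  on the algebra of Higson functions), represented extensionally (value 0 off C_h(X)).\<close>
definition higson_character :: "(('a::metric_space \<Rightarrow> complex) \<Rightarrow> complex) \<Rightarrow> bool" where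
  "higson_character \<phi> \<longleftrightarrow>
     (\<forall>f g. higson f \<longrightarrow> higson g \<longrightarrow> \<phi> (\<lambda>x. f x + g x) = \<phi> f + \<phi> g) \<and>
     (\<forall>f g. higson f \<longrightarrow> higson g \<longrightarrow> \<phi> (\<lambda>x. f x * g x) = \<phi> f * \<phi> g) \<and>
     (\<forall>c f. higson f \<longrightarrow> \<phi> (\<lambda>x. c * f x) = c * \<phi> f) \<and>
     \<phi> (\<lambda>x. 1) = 1 \<and>
     (\<forall>f. \<not> higson f \<longrightarrow> \<phi> f = 0)"

definition higson_eval :: "'a::metric_space \<Rightarrow> (('a \<Rightarrow> complex) \<Rightarrow> complex)" where
  "higson_eval x = (\<lambda>f. if higson f then f x else 0)"

definition higson_compactification :: "'a::metric_space itself \<Rightarrow> (('a \<Rightarrow> complex) \<Rightarrow> complex) set" where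
  "higson_compactification _ = {\<phi>. higson_character \<phi>}"

definition higson_corona :: "'a::metric_space itself \<Rightarrow> (('a \<Rightarrow> complex) \<Rightarrow> complex) set" where
  "higson_corona T = higson_compactification T - range higson_eval"

end

theory Submission
  imports Defs
begin


lemma higson_bdd: "higson f \<Longrightarrow> \<exists>B>0. \<forall>x. cmod (f x) \<le> B"
  unfolding higson_def by (metis dual_order.trans gt_ex less_eq_real_def linorder_not_less)

lemma higson_const: "higson (\<lambda>x::'a::metric_space. c)"
  unfolding higson_def by (auto intro!: exI[of _ "{}"])

lemma higson_add:
  assumes f: "higson f" and g: "higson g"
  shows "higson (\<lambda>x. f x + g x)"
proof -
  obtain B1 where B1: "\<forall>x. cmod (f x) \<le> B1" using f higson_def by blast
  obtain B2 where B2: "\<forall>x. cmod (g x) \<le> B2" using g higson_def by blast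
  have "\<forall>x. cmod (f x + g x) \<le> B1 + B2" using B1 B2 by (meson add_mono norm_triangle_le)
  moreover have "\<exists>F. finite F \<and> (\<forall>x y. x \<notin> F \<and> y \<notin> F \<and> dist x y < R \<longrightarrow> cmod (f x + g x - (f y + g y)) < e)"
    if e: "e > 0" and R: "R > 0" for e R
  proof -
    obtain F1 where F1: "finite F1" "\<forall>x y. x \<notin> F1 \<and> y \<notin> F1 \<and> dist x y < R \<longrightarrow> cmod (f x - f y) < e/2"
      using f e R unfolding higson_def by (meson half_gt_zero)
    obtain F2 where F2: "finite F2" "\<forall>x y. x \<notin> F2 \<and> y \<notin> F2 \<and> dist x y < R \<longrightarrow> cmod (g x - g y) < e/2"
      using g e R unfolding higson_def by (meson half_gt_zero)
    show ?thesis
    proof (intro exI[of _ "F1 \<union> F2"] conjI allI impI)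
      fix x y assume h: "x \<notin> F1 \<union> F2 \<and> y \<notin> F1 \<union> F2 \<and> dist x y < R"
      have "cmod (f x + g x - (f y + g y)) \<le> cmod (f x - f y) + cmod (g x - g y)"
        by (metis add_diff_add norm_triangle_ineq)
      also have "\<dots> < e/2 + e/2" using F1 F2 h by (intro add_strict_mono) auto
      finally show "cmod (f x + g x - (f y + g y)) < e" by simp
    qed (use F1 F2 in auto)
  qed
  ultimately show ?thesis unfolding higson_def by blast
qed

lemma higson_mult:
  assumes f: "higson f" and g: "higson g"
  shows "higson (\<lambda>x. f x * g x)"
proof -
  obtain B1 where B1: "B1 > 0" "\<forall>x. cmod (f x) \<le> B1" using f higson_bdd by blast
  obtain B2 where B2: "B2 > 0" "\<forall>x. cmod (g x) \<le> B2" using g higson_bdd by blast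
  have "\<forall>x. cmod (f x * g x) \<le> B1 * B2" using B1 B2
    by (simp add: norm_mult mult_mono')
  moreover have "\<exists>F. finite F \<and> (\<forall>x y. x \<notin> F \<and> y \<notin> F \<and> dist x y < R \<longrightarrow> cmod (f x * g x - f y * g y) < e)"
    if e: "e > 0" and R: "R > 0" for e R
  proof -
    have e1: "e / (2*B2) > 0" "e / (2*B1) > 0" using e B1 B2 by auto
    obtain F1 where F1: "finite F1" "\<forall>x y. x \<notin> F1 \<and> y \<notin> F1 \<and> dist x y < R \<longrightarrow> cmod (f x - f y) < e/(2*B2)"
      using f e1 R unfolding higson_def by meson
    obtain F2 where F2: "finite F2" "\<forall>x y. x \<notin> F2 \<and> y \<notin> F2 \<and> dist x y < R \<longrightarrow> cmod (g x - g y) < e/(2*B1)"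
      using g e1 R unfolding higson_def by meson
    show ?thesis
    proof (intro exI[of _ "F1 \<union> F2"] conjI allI impI)
      fix x y assume h: "x \<notin> F1 \<union> F2 \<and> y \<notin> F1 \<union> F2 \<and> dist x y < R"
      have "f x * g x - f y * g y = f x * (g x - g y) + g y * (f x - f y)" by (simp add: algebra_simps)
      hence "cmod (f x * g x - f y * g y) \<le> cmod (f x) * cmod (g x - g y) + cmod (g y) * cmod (f x - f y)"
        by (metis norm_mult norm_triangle_ineq)
      moreover have "cmod (f x) * cmod (g x - g y) < e/2"
      proof -
        have "cmod (g x - g y) < e/(2*B1)" using F2 h by auto
        hence "cmod (f x) * cmod (g x - g y) \<le> B1 * cmod (g x - g y)" "B1 * cmod (g x - g y) < B1 * (e/(2*B1))"
          using B1 by (auto intro: mult_right_mono mult_strict_left_mono simp del: times_divide_eq_right)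
        thus ?thesis using B1 by simp
      qed
      moreover have "cmod (g y) * cmod (f x - f y) < e/2"
      proof -
        have "cmod (f x - f y) < e/(2*B2)" using F1 h by auto
        hence "cmod (g y) * cmod (f x - f y) \<le> B2 * cmod (f x - f y)" "B2 * cmod (f x - f y) < B2 * (e/(2*B2))"
          using B2 by (auto intro: mult_right_mono mult_strict_left_mono simp del: times_divide_eq_right)
        thus ?thesis using B2 by simp
      qed
      ultimately show "cmod (f x * g x - f y * g y) < e" by linarith
    qed (use F1 F2 in auto)
  qed
  ultimately show ?thesis unfolding higson_def by blast
qed

lemma higson_cmult:
  assumes f: "higson f" shows "higson (\<lambda>x. c * f x)"
  using higson_mult[OF higson_const f] .

lemma higson_indicator: "higson (\<lambda>x::'a::metric_space. if x = a then 1 else 0)"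
  unfolding higson_def
  by (intro conjI exI[of _ 1] allI impI; (rule exI[of _ "{a}"])?) auto



lemma ulf_ball_finite:
  assumes "ulf TYPE('a::metric_space)" shows "finite (ball (x::'a) r)"
proof (cases "r > 0")
  case True then show ?thesis using assms unfolding ulf_def by blast
next
  case False then show ?thesis by (metis ball_eq_empty finite.emptyI not_less)
qed

lemma far_point:
  assumes "infinite (UNIV :: 'a::metric_space set)" "ulf TYPE('a)"
  shows "\<exists>y::'a. dist p y \<ge> R"
proof -
  have "finite (ball p R)" using ulf_ball_finite[OF assms(2)] .
  then have "UNIV - ball p R \<noteq> {}" using assms(1) by (metis Diff_empty finite_Diff2 finite.emptyI)
  then show ?thesis by (auto simp: not_less)
qed

lemma sparse_seq:
  assumes "infinite (UNIV :: 'a::metric_space set)" "ulf TYPE('a)"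
  shows "\<exists>xs::nat \<Rightarrow> 'a. \<forall>n m. n \<noteq> m \<longrightarrow> dist (xs n) (xs m) \<ge> 2 * (real n + real m + 2)"
proof -
  obtain p :: 'a where True by blast
  have "\<exists>f::nat\<Rightarrow>'a. \<forall>n. True \<and> dist p (f (Suc n)) \<ge> 2 * dist p (f n) + 4 * (real n + 2)"
    by (rule dependent_nat_choice) (use far_point[OF assms] in auto)
  then obtain f :: "nat \<Rightarrow> 'a" where f: "\<And>n. dist p (f (Suc n)) \<ge> 2 * dist p (f n) + 4 * (real n + 2)"
    by blast
  have inc: "incseq (\<lambda>n. dist p (f n))"
    by (rule incseq_SucI) (use f in \<open>smt (verit) zero_le_dist of_nat_0_le_iff\<close>)
  have key: "dist (f n) (f m) \<ge> 2 * (real n + real m + 2)" if "m < n" for m n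
  proof -
    obtain k where k: "n = Suc k" using \<open>m < n\<close> by (cases n) auto
    have mk: "m \<le> k" using that k by simp
    have "dist p (f m) \<le> dist p (f k)" using inc mk by (simp add: incseq_def)
    moreover have "dist p (f n) \<le> dist p (f m) + dist (f m) (f n)" by (rule dist_triangle)
    moreover have "real m \<le> real k" using mk by simp
    moreover have "dist p (f k) \<ge> 0" by simp
    moreover have "dist (f m) (f n) = dist (f n) (f m)" by (rule dist_commute)
    moreover have "real n = real k + 1" using k by simp
    ultimately show ?thesis using f[of k, folded k] by argo
  qed
  show ?thesis
  proof (intro exI[of _ f] allI impI)
    fix n m :: nat assume "n \<noteq> m"
    then show "dist (f n) (f m) \<ge> 2 * (real n + real m + 2)"
      using key[of m n] key[of n m] by (cases "m < n") (auto simp: dist_commute add.commute)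
  qed
qed

definition near :: "(nat \<Rightarrow> 'a::metric_space) \<Rightarrow> 'a \<Rightarrow> nat \<Rightarrow> bool" where
  "near xs x n \<longleftrightarrow> dist x (xs n) < real n + 1"

definition bump :: "(nat \<Rightarrow> 'a::metric_space) \<Rightarrow> nat \<Rightarrow> 'a \<Rightarrow> real" where
  "bump xs n x = max 0 (1 - dist x (xs n) / (real n + 1))"

definition fA :: "(nat \<Rightarrow> 'a::metric_space) \<Rightarrow> nat set \<Rightarrow> 'a \<Rightarrow> complex" where
  "fA xs A x = (if \<exists>n\<in>A. near xs x n then complex_of_real (bump xs (THE n. n \<in> A \<and> near xs x n) x) else 0)"

locale sparse =
  fixes xs :: "nat \<Rightarrow> 'a::metric_space"
  assumes sep: "\<And>n m. n \<noteq> m \<Longrightarrow> dist (xs n) (xs m) \<ge> 2 * (real n + real m + 2)"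
begin

lemma near_unique: "near xs x n \<Longrightarrow> near xs x m \<Longrightarrow> n = m"
  unfolding near_def using sep[of n m] dist_triangle[of "xs n" "xs m" x]
  by (smt (verit, best) dist_commute of_nat_0_le_iff)

lemma xs_inj: "inj xs"
proof (rule injI)
  fix n m assume "xs n = xs m"
  then show "n = m" using sep[of n m] by (cases "n = m") auto
qed

lemma near_self: "near xs (xs n) n" unfolding near_def by simp

lemma bump_far: "\<not> near xs x n \<Longrightarrow> bump xs n x = 0"
  unfolding near_def bump_def by (simp add: field_simps)

lemma bump_lip: "\<bar>bump xs n x - bump xs n y\<bar> \<le> dist x y / (real n + 1)"
proof -
  have "\<bar>dist x (xs n) - dist y (xs n)\<bar> \<le> dist x y"
    using dist_triangle[of x "xs n" y] dist_triangle[of y "xs n" x] by (simp add: dist_commute abs_le_iff)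
  hence "\<bar>dist x (xs n) / (real n + 1) - dist y (xs n) / (real n + 1)\<bar> \<le> dist x y / (real n + 1)"
    by (simp add: diff_divide_distrib[symmetric] abs_divide divide_right_mono)
  thus ?thesis unfolding bump_def by linarith
qed

lemma bump_bound: "0 \<le> bump xs n x" "bump xs n x \<le> 1"
  unfolding bump_def by auto

lemma fA_eq:
  assumes "n \<in> A" "near xs x n \<or> \<not> (\<exists>m\<in>A. near xs x m)"
  shows "fA xs A x = complex_of_real (bump xs n x)"
proof (cases "near xs x n")
  case True
  have "(THE m. m \<in> A \<and> near xs x m) = n"
    using True assms(1) near_unique by blast
  then show ?thesis using True assms(1) unfolding fA_def by auto
next
  case False
  then show ?thesis using assms bump_far[OF False] unfolding fA_def by auto
qed

lemma fA_zero: "\<not> (\<exists>m\<in>A. near xs x m) \<Longrightarrow> fA xs A x = 0"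
  unfolding fA_def by auto

lemma fA_xs: "fA xs A (xs k) = (if k \<in> A then 1 else 0)"
proof (cases "k \<in> A")
  case True
  then show ?thesis using fA_eq[OF True] near_self by (simp add: bump_def)
next
  case False
  have "\<not> (\<exists>m\<in>A. near xs (xs k) m)" using near_unique near_self False by blast
  then show ?thesis using False fA_zero by simp
qed

lemma fA_bound: "cmod (fA xs A x) \<le> 1"
  unfolding fA_def using bump_bound by auto

lemma fA_higson:
  assumes ulf: "ulf TYPE('a)"
  shows "higson (fA xs A)"
proof -
  have "\<exists>F. finite F \<and> (\<forall>x y. x \<notin> F \<and> y \<notin> F \<and> dist x y < R \<longrightarrow> cmod (fA xs A x - fA xs A y) < e)"
    if e: "e > 0" and R: "R > 0" for e R
  proof -
    define N where "N = nat \<lceil>R + R / e\<rceil>"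
    have N1: "real N \<ge> R" unfolding N_def using R e
      by (smt (verit) divide_pos_pos of_nat_nat real_nat_ceiling_ge)
    have N2: "R / (real N + 1) < e"
    proof -
      have "real N \<ge> R / e" unfolding N_def using R e
        by (smt (verit) divide_pos_pos of_nat_nat real_nat_ceiling_ge)
      hence "R < e * (real N + 1)" using e by (simp add: field_simps)
      thus ?thesis by (simp add: field_simps)
    qed
    define F where "F = (\<Union>n<N. ball (xs n) (real n + 1))"
    have finF: "finite F" unfolding F_def using ulf_ball_finite[OF ulf] by auto
    have one: "cmod (fA xs A x - fA xs A y) < e"
      if x: "x \<notin> F" and xy: "dist x y < R" and n: "n \<in> A" "near xs x n" for x y n
    proof -
      have nN: "n \<ge> N"
      proof (rule ccontr)
        assume "\<not> n \<ge> N"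
        hence "x \<in> F" using n unfolding F_def near_def by (auto simp: dist_commute)
        thus False using x by simp
      qed
      have fy: "near xs y n \<or> \<not> (\<exists>m\<in>A. near xs y m)"
      proof (rule ccontr)
        assume "\<not> ?thesis"
        then obtain m where m: "m \<in> A" "near xs y m" "m \<noteq> n" by blast
        have "dist (xs n) (xs m) \<le> dist x (xs n) + dist x y + dist y (xs m)"
          using dist_triangle[of "xs n" "xs m" x] dist_triangle[of x "xs m" y]
          by (simp add: dist_commute)
        moreover have "dist (xs n) (xs m) \<ge> 2 * (real n + real m + 2)" using sep m(3) by auto
        moreover have "real N \<le> real n" using nN by simp
        moreover have "dist x (xs n) < real n + 1" "dist y (xs m) < real m + 1"
          using n(2) m(2) unfolding near_def by auto
        moreover have "real m \<ge> 0" by simp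
        ultimately show False using xy N1 by argo
      qed
      have "fA xs A x - fA xs A y = complex_of_real (bump xs n x - bump xs n y)"
        using fA_eq[OF n(1)] n fy by simp
      hence "cmod (fA xs A x - fA xs A y) = \<bar>bump xs n x - bump xs n y\<bar>"
        by (metis norm_of_real)
      also have "\<dots> \<le> dist x y / (real n + 1)" by (rule bump_lip)
      also have "\<dots> \<le> R / (real N + 1)" using xy nN R
        by (intro frac_le) auto
      also have "\<dots> < e" by (rule N2)
      finally show ?thesis .
    qed
    show ?thesis
    proof (intro exI[of _ F] conjI allI impI)
      fix x y assume h: "x \<notin> F \<and> y \<notin> F \<and> dist x y < R"
      show "cmod (fA xs A x - fA xs A y) < e"
      proof (cases "\<exists>m\<in>A. near xs x m")
        case True then show ?thesis using one h by blast
      next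
        case False
        show ?thesis
        proof (cases "\<exists>m\<in>A. near xs y m")
          case True
          then obtain m where "m \<in> A" "near xs y m" by blast
          then have "cmod (fA xs A y - fA xs A x) < e" using one[of y x m] h by (auto simp: dist_commute)
          then show ?thesis by (simp add: norm_minus_commute)
        next
          case False2: False
          show ?thesis using fA_zero[OF False] fA_zero[OF False2] e by simp
        qed
      qed
    qed (rule finF)
  qed
  then show ?thesis unfolding higson_def using fA_bound by blast
qed

end


definition fip :: "nat set set \<Rightarrow> bool" where
  "fip B \<longleftrightarrow> (\<forall>G\<subseteq>B. finite G \<longrightarrow> \<Inter>G \<noteq> {})"

lemma maximal_fip:
  assumes "fip B"
  shows "\<exists>M. B \<subseteq> M \<and> fip M \<and> (\<forall>Y. Y \<in> M \<or> - Y \<in> M)"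
proof -
  define A where "A = {M. B \<subseteq> M \<and> fip M}"
  have "\<exists>U\<in>A. \<forall>X\<in>C. X \<subseteq> U" if C: "C \<in> chains A" for C
  proof (intro bexI[of _ "B \<union> \<Union>C"])
    show "\<forall>X\<in>C. X \<subseteq> B \<union> \<Union>C" by auto
    have CA: "C \<subseteq> A" and ch: "chain\<^sub>\<subseteq> C" using C unfolding chains_def by auto
    have "fip (B \<union> \<Union>C)" unfolding fip_def
    proof (intro allI impI)
      fix G assume G: "G \<subseteq> B \<union> \<Union>C" "finite G"
      show "\<Inter>G \<noteq> {}"
      proof (cases "C = {}")
        case True
        then show ?thesis using G assms unfolding fip_def by auto
      next
        case False
        then obtain c0 where c0: "c0 \<in> C" by blast
        have "G \<subseteq> \<Union>C" using G c0 CA unfolding A_def by blast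
        then obtain c where c: "c \<in> C" "G \<subseteq> c"
        proof (cases "G = {}")
          case True then show ?thesis using that c0 by blast
        next
          case False
          show ?thesis
            using finite_subset_Union_chain[of G C UNIV, OF _ \<open>G \<subseteq> \<Union>C\<close> \<open>C \<noteq> {}\<close>] G ch that
            unfolding chain_subset_alt_def by metis
        qed
        then have "c \<in> A" using CA by blast
        then have "fip c" unfolding A_def by simp
        then show ?thesis using c G unfolding fip_def by simp
      qed
    qed
    then show "B \<union> \<Union>C \<in> A" unfolding A_def by auto
  qed
  then obtain M where M: "M \<in> A" "\<forall>X\<in>A. M \<subseteq> X \<longrightarrow> X = M"
    using Zorn_Lemma2[of A] by blast
  have "Y \<in> M \<or> - Y \<in> M" for Y
  proof (rule ccontr)
    assume nY: "\<not> (Y \<in> M \<or> - Y \<in> M)"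
    have "\<not> fip (insert Y M)"
    proof
      assume "fip (insert Y M)"
      hence "insert Y M \<in> A" using M(1) unfolding A_def by auto
      hence "insert Y M = M" using M(2) by blast
      thus False using nY by blast
    qed
    then obtain G1 where G1: "G1 \<subseteq> insert Y M" "finite G1" "\<Inter>G1 = {}" unfolding fip_def by blast
    have "\<not> fip (insert (-Y) M)"
    proof
      assume "fip (insert (-Y) M)"
      hence "insert (-Y) M \<in> A" using M(1) unfolding A_def by auto
      hence "insert (-Y) M = M" using M(2) by blast
      thus False using nY by blast
    qed
    then obtain G2 where G2: "G2 \<subseteq> insert (-Y) M" "finite G2" "\<Inter>G2 = {}" unfolding fip_def by blast
    have "fip M" using M(1) unfolding A_def by auto
    moreover have "(G1 - {Y}) \<union> (G2 - {-Y}) \<subseteq> M" using G1 G2 by auto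
    moreover have "finite ((G1 - {Y}) \<union> (G2 - {-Y}))" using G1 G2 by auto
    ultimately have "\<Inter>((G1 - {Y}) \<union> (G2 - {-Y})) \<noteq> {}" unfolding fip_def by blast
    then obtain x where x: "x \<in> \<Inter>((G1 - {Y}) \<union> (G2 - {-Y}))" by blast
    show False
    proof (cases "x \<in> Y")
      case True
      hence "x \<in> \<Inter>G1" using x by auto
      thus False using G1 by blast
    next
      case False
      hence "x \<in> \<Inter>G2" using x by auto
      thus False using G2 by blast
    qed
  qed
  then show ?thesis using M(1) unfolding A_def by blast
qed


definition ufil :: "nat set set \<Rightarrow> nat filter" where
  "ufil M = (INF X\<in>M. principal X)"

lemma eventually_ufil: "eventually P (ufil M) \<longleftrightarrow> (\<exists>G\<subseteq>M. finite G \<and> (\<forall>n\<in>\<Inter>G. P n))"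
proof -
  have *: "eventually P (INF X\<in>G. principal X) \<longleftrightarrow> (\<forall>n\<in>\<Inter>G. P n)" if "finite G" for G
    using that by (simp add: INF_principal_finite eventually_principal)
  have e: "eventually P (ufil M) \<longleftrightarrow> (\<exists>X\<subseteq>M. finite X \<and> eventually P (INF b\<in>X. principal b))"
    unfolding ufil_def by (rule eventually_INF)
  show ?thesis unfolding e
  proof
    assume "\<exists>X\<subseteq>M. finite X \<and> eventually P (INF b\<in>X. principal b)"
    then show "\<exists>G\<subseteq>M. finite G \<and> (\<forall>n\<in>\<Inter>G. P n)" using * by blast
  next
    assume "\<exists>G\<subseteq>M. finite G \<and> (\<forall>n\<in>\<Inter>G. P n)"
    then show "\<exists>X\<subseteq>M. finite X \<and> eventually P (INF b\<in>X. principal b)" using * by blast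
  qed
qed

lemma ufil_mem: "X \<in> M \<Longrightarrow> eventually (\<lambda>n. n \<in> X) (ufil M)"
  unfolding eventually_ufil by (intro exI[of _ "{X}"]) auto

lemma ufil_nbot: assumes "fip M" shows "ufil M \<noteq> bot"
proof
  assume "ufil M = bot"
  hence "eventually (\<lambda>n. False) (ufil M)" by simp
  then obtain G where "G \<subseteq> M" "finite G" "\<forall>n\<in>\<Inter>G. False" unfolding eventually_ufil by blast
  moreover have "\<Inter>G \<noteq> {}" using assms \<open>G \<subseteq> M\<close> \<open>finite G\<close> unfolding fip_def by blast
  ultimately show False by blast
qed

lemma ufil_ultra: "(\<forall>Y. Y \<in> M \<or> - Y \<in> M) \<Longrightarrow> eventually P (ufil M) \<or> eventually (\<lambda>n. \<not> P n) (ufil M)"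
  using ufil_mem[of "{n. P n}" M] ufil_mem[of "- {n. P n}" M] by auto

lemma ultra_lim:
  fixes s :: "nat \<Rightarrow> complex"
  assumes nb: "F \<noteq> bot" and ultra: "\<And>P. eventually P F \<or> eventually (\<lambda>n. \<not> P n) F"
    and bd: "\<And>n. cmod (s n) \<le> B"
  shows "\<exists>L. (s \<longlongrightarrow> L) F"
proof -
  have "compact (cball (0::complex) B)" by simp
  moreover have "filtermap s F \<noteq> bot" using nb by (simp add: filtermap_bot_iff)
  moreover have "eventually (\<lambda>z. z \<in> cball 0 B) (filtermap s F)"
    using bd by (simp add: eventually_filtermap)
  ultimately obtain L where L: "inf (nhds L) (filtermap s F) \<noteq> bot"
    unfolding compact_filter by blast
  have "(s \<longlongrightarrow> L) F"
    unfolding tendsto_def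
  proof (intro allI impI)
    fix S :: "complex set" assume S: "open S" "L \<in> S"
    show "eventually (\<lambda>x. s x \<in> S) F"
    proof (rule ccontr)
      assume "\<not> eventually (\<lambda>x. s x \<in> S) F"
      hence e: "eventually (\<lambda>x. s x \<notin> S) F" using ultra by blast
      have "eventually (\<lambda>z. z \<in> S) (nhds L)" using S eventually_nhds by blast
      moreover have "eventually (\<lambda>z. z \<notin> S) (filtermap s F)" using e by (simp add: eventually_filtermap)
      ultimately have "eventually (\<lambda>z. False) (inf (nhds L) (filtermap s F))"
        unfolding eventually_inf by blast
      thus False using L by (simp add: trivial_limit_def)
    qed
  qed
  thus ?thesis by blast
qed



definition Iset :: "(nat \<times> nat set set) set" where
  "Iset = (\<Union>n. {n} \<times> Pow (Pow {..<n}))"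

definition enum :: "nat \<Rightarrow> nat \<times> nat set set" where
  "enum = from_nat_into Iset"

definition indep :: "nat set \<Rightarrow> nat set" where
  "indep S = {k. S \<inter> {..<fst (enum k)} \<in> snd (enum k)}"

lemma enum_bij: "bij_betw enum UNIV Iset"
proof -
  have "countable Iset" unfolding Iset_def
    by (rule countable_UN[OF countableI_type]) (rule countable_finite, simp)
  moreover have "infinite Iset"
  proof
    assume "finite Iset"
    moreover have "range (\<lambda>n. (n, {})) \<subseteq> Iset" unfolding Iset_def by auto
    ultimately have "finite (range (\<lambda>n::nat. (n, {} :: nat set set)))" by (rule rev_finite_subset)
    moreover have "inj (\<lambda>n::nat. (n, {} :: nat set set))" by (auto intro: injI)
    ultimately show False using finite_imageD by blast
  qed
  ultimately show ?thesis unfolding enum_def by (rule bij_betw_from_nat_into)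
qed

lemma finite_ev_notin: "finite (B :: nat set) \<Longrightarrow> eventually (\<lambda>n. n \<notin> B) sequentially"
proof -
  assume "finite B"
  then obtain b where "B \<subseteq> {..<b}" using finite_nat_bounded by blast
  then show ?thesis unfolding eventually_sequentially by (intro exI[of _ b]) auto
qed

lemma indep_prop:
  assumes "finite P" "finite Q" "P \<inter> Q = {}" "finite K"
  shows "\<exists>k. k \<notin> K \<and> (\<forall>S\<in>P. k \<in> indep S) \<and> (\<forall>T\<in>Q. k \<notin> indep T)"
proof -
  define kk where "kk n = inv_into UNIV enum (n, (\<lambda>S. S \<inter> {..<n}) ` P)" for n
  have ekk: "enum (kk n) = (n, (\<lambda>S. S \<inter> {..<n}) ` P)" for n
  proof -
    have "(n, (\<lambda>S. S \<inter> {..<n}) ` P) \<in> Iset" unfolding Iset_def by auto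
    hence "(n, (\<lambda>S. S \<inter> {..<n}) ` P) \<in> range enum" using enum_bij by (simp add: bij_betw_def)
    thus ?thesis unfolding kk_def by (rule f_inv_into_f)
  qed
  have injk: "inj kk"
  proof (rule injI)
    fix a b assume "kk a = kk b"
    hence "fst (enum (kk a)) = fst (enum (kk b))" by simp
    thus "a = b" using ekk by simp
  qed
  have ev1: "eventually (\<lambda>n. n \<notin> kk -` K) sequentially"
    by (rule finite_ev_notin) (rule finite_vimageI[OF assms(4) injk])
  have ev2: "eventually (\<lambda>n. \<forall>T\<in>Q. \<forall>S\<in>P. S \<inter> {..<n} \<noteq> T \<inter> {..<n}) sequentially"
  proof (rule eventually_ball_finite[OF assms(2)], rule ballI)
    fix T assume T: "T \<in> Q"
    show "eventually (\<lambda>n. \<forall>S\<in>P. S \<inter> {..<n} \<noteq> T \<inter> {..<n}) sequentially"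
    proof (rule eventually_ball_finite[OF assms(1)], rule ballI)
      fix S assume S: "S \<in> P"
      have "S \<noteq> T" using S T assms(3) by blast
      then obtain j where j: "(j \<in> S) \<noteq> (j \<in> T)" by blast
      show "eventually (\<lambda>n. S \<inter> {..<n} \<noteq> T \<inter> {..<n}) sequentially"
        unfolding eventually_sequentially
      proof (intro exI[of _ "Suc j"] allI impI)
        fix n assume "Suc j \<le> n"
        hence "j \<in> {..<n}" by simp
        thus "S \<inter> {..<n} \<noteq> T \<inter> {..<n}" using j by blast
      qed
    qed
  qed
  obtain n where n1: "n \<notin> kk -` K" and n2: "\<forall>T\<in>Q. \<forall>S\<in>P. S \<inter> {..<n} \<noteq> T \<inter> {..<n}"
    using eventually_happens'[OF trivial_limit_sequentially eventually_conj[OF ev1 ev2]] by blast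
  show ?thesis
  proof (intro exI[of _ "kk n"] conjI ballI)
    show "kk n \<notin> K" using n1 by simp
  next
    fix S assume "S \<in> P"
    then show "kk n \<in> indep S" unfolding indep_def using ekk[of n] by auto
  next
    fix T assume T: "T \<in> Q"
    show "kk n \<notin> indep T"
    proof
      assume "kk n \<in> indep T"
      hence "T \<inter> {..<n} \<in> (\<lambda>S. S \<inter> {..<n}) ` P" unfolding indep_def using ekk[of n] by auto
      then obtain S where "S \<in> P" "T \<inter> {..<n} = S \<inter> {..<n}" by blast
      thus False using n2 T by metis
    qed
  qed
qed

definition base :: "nat set set \<Rightarrow> nat set set" where
  "base U = indep ` U \<union> (\<lambda>S. - indep S) ` (- U) \<union> range (\<lambda>k. - {k})"

lemma fip_base: "fip (base U)"
  unfolding fip_def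
proof (intro allI impI)
  fix G assume G: "G \<subseteq> base U" "finite G"
  obtain P where P: "P \<subseteq> U" "finite P" "G \<inter> indep ` U = indep ` P"
    using finite_subset_image[of "G \<inter> indep ` U" indep U] G(2) by auto
  obtain Q where Q: "Q \<subseteq> - U" "finite Q" "G \<inter> (\<lambda>S. - indep S) ` (- U) = (\<lambda>S. - indep S) ` Q"
    using finite_subset_image[of "G \<inter> (\<lambda>S. - indep S) ` (- U)" "\<lambda>S. - indep S" "- U"] G(2) by auto
  obtain K where K: "finite K" "G \<inter> range (\<lambda>k. - {k}) = (\<lambda>k. - {k}) ` K"
    using finite_subset_image[of "G \<inter> range (\<lambda>k. - {k})" "\<lambda>k. - {k}" UNIV] G(2) by auto
  have "P \<inter> Q = {}" using P Q by blast
  then obtain k where k: "k \<notin> K" "\<forall>S\<in>P. k \<in> indep S" "\<forall>T\<in>Q. k \<notin> indep T"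
    using indep_prop[OF P(2) Q(2) _ K(1)] by blast
  have "k \<in> X" if X: "X \<in> G" for X
  proof -
    have "X \<in> indep ` U \<or> X \<in> (\<lambda>S. - indep S) ` (- U) \<or> X \<in> range (\<lambda>k. - {k})"
      using X G(1) unfolding base_def by blast
    moreover
    { assume "X \<in> indep ` U"
      hence "X \<in> indep ` P" using P(3) X by blast
      hence "k \<in> X" using k by blast }
    moreover
    { assume "X \<in> (\<lambda>S. - indep S) ` (- U)"
      hence "X \<in> (\<lambda>S. - indep S) ` Q" using Q(3) X by blast
      hence "k \<in> X" using k by blast }
    moreover
    { assume "X \<in> range (\<lambda>k. - {k})"
      hence "X \<in> (\<lambda>k. - {k}) ` K" using K(2) X by blast
      hence "k \<in> X" using k by blast }
    ultimately show "k \<in> X" by blast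
  qed
  then show "\<Inter>G \<noteq> {}" by blast
qed

definition Mx :: "nat set set \<Rightarrow> nat set set" where
  "Mx U = (SOME M. base U \<subseteq> M \<and> fip M \<and> (\<forall>Y. Y \<in> M \<or> - Y \<in> M))"

lemma Mx: "base U \<subseteq> Mx U" "fip (Mx U)" "\<forall>Y. Y \<in> Mx U \<or> - Y \<in> Mx U"
  using someI_ex[OF maximal_fip[OF fip_base[of U]]] unfolding Mx_def by blast+

lemma Mx_nbot: "ufil (Mx U) \<noteq> bot" using ufil_nbot Mx(2) by blast

lemma Mx_ultra: "eventually P (ufil (Mx U)) \<or> eventually (\<lambda>n. \<not> P n) (ufil (Mx U))"
  using ufil_ultra Mx(3) by blast

definition phi :: "(nat \<Rightarrow> 'a::metric_space) \<Rightarrow> nat set set \<Rightarrow> ('a \<Rightarrow> complex) \<Rightarrow> complex" where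
  "phi xs U f = (if higson f then Lim (ufil (Mx U)) (\<lambda>n. f (xs n)) else 0)"

lemma lim_exists: "higson f \<Longrightarrow> \<exists>L. ((\<lambda>n. f (xs n)) \<longlongrightarrow> L) (ufil (Mx U))"
proof -
  assume "higson f"
  then obtain B where "\<forall>x. cmod (f x) \<le> B" unfolding higson_def by blast
  then have b: "\<And>n. cmod (f (xs n)) \<le> B" by blast
  show ?thesis by (rule ultra_lim[where F="ufil (Mx U)", OF Mx_nbot Mx_ultra b])
qed

lemma phi_eq: "higson f \<Longrightarrow> ((\<lambda>n. f (xs n)) \<longlongrightarrow> L) (ufil (Mx U)) \<Longrightarrow> phi xs U f = L"
  unfolding phi_def using tendsto_Lim[OF Mx_nbot] by simp

lemma phi_char: "higson_character (phi xs U)"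
  unfolding higson_character_def
proof (intro conjI allI impI)
  fix f g :: "'a \<Rightarrow> complex" assume f: "higson f" and g: "higson g"
  obtain a where a: "((\<lambda>n. f (xs n)) \<longlongrightarrow> a) (ufil (Mx U))" using lim_exists[OF f] by blast
  obtain b where b: "((\<lambda>n. g (xs n)) \<longlongrightarrow> b) (ufil (Mx U))" using lim_exists[OF g] by blast
  show "phi xs U (\<lambda>x. f x + g x) = phi xs U f + phi xs U g"
    using phi_eq[OF higson_add[OF f g] tendsto_add[OF a b]] phi_eq[OF f a] phi_eq[OF g b] by simp
  show "phi xs U (\<lambda>x. f x * g x) = phi xs U f * phi xs U g"
    using phi_eq[OF higson_mult[OF f g] tendsto_mult[OF a b]] phi_eq[OF f a] phi_eq[OF g b] by simp
next
  fix c :: complex and f :: "'a \<Rightarrow> complex" assume f: "higson f"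
  obtain a where a: "((\<lambda>n. f (xs n)) \<longlongrightarrow> a) (ufil (Mx U))" using lim_exists[OF f] by blast
  show "phi xs U (\<lambda>x. c * f x) = c * phi xs U f"
    using phi_eq[OF higson_cmult[OF f] tendsto_mult[OF tendsto_const a]] phi_eq[OF f a] by simp
next
  show "phi xs U (\<lambda>x. 1) = 1"
  proof -
    have "higson (\<lambda>x::'a. 1::complex)" by (rule higson_const)
    then show ?thesis using phi_eq[where f="\<lambda>x. 1" and xs=xs and L=1 and U=U] by simp
  qed
next
  fix f :: "'a \<Rightarrow> complex" assume "\<not> higson f"
  then show "phi xs U f = 0" unfolding phi_def by simp
qed

lemma (in sparse) phi_not_eval: "phi xs U \<noteq> higson_eval x"
proof
  assume eq: "phi xs U = higson_eval x"
  define ind where "ind = (\<lambda>y::'a. if y = x then (1::complex) else 0)"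
  have hi: "higson ind" unfolding ind_def by (rule higson_indicator)
  have "eventually (\<lambda>n. xs n \<noteq> x) (ufil (Mx U))"
  proof (cases "\<exists>n0. xs n0 = x")
    case True
    then obtain n0 where n0: "xs n0 = x" by blast
    have "- {n0} \<in> base U" unfolding base_def by blast
    then have "- {n0} \<in> Mx U" using Mx(1) by (rule subsetD[rotated])
    then have "eventually (\<lambda>n. n \<in> - {n0}) (ufil (Mx U))" by (rule ufil_mem)
    then show ?thesis
      by (rule eventually_mono) (use n0 xs_inj in \<open>auto simp: inj_eq\<close>)
  next
    case False then show ?thesis by simp
  qed
  hence "eventually (\<lambda>n. ind (xs n) = 0) (ufil (Mx U))"
    by (rule eventually_mono) (simp add: ind_def)
  hence "phi xs U ind = 0" using phi_eq[OF hi tendsto_eventually] by blast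
  moreover have "higson_eval x ind = 1" using hi unfolding higson_eval_def ind_def by simp
  ultimately show False using eq by simp
qed

lemma (in sparse) phi_sep:
  assumes ulf: "ulf TYPE('a)" and S: "S \<in> U" "S \<notin> V"
  shows "phi xs U (fA xs (indep S)) = 1" "phi xs V (fA xs (indep S)) = 0"
proof -
  have hi: "higson (fA xs (indep S))" by (rule fA_higson[OF ulf])
  have "indep S \<in> base U" using S(1) unfolding base_def by blast
  then have "indep S \<in> Mx U" using Mx(1) by (rule subsetD[rotated])
  hence "eventually (\<lambda>n. n \<in> indep S) (ufil (Mx U))" by (rule ufil_mem)
  hence "eventually (\<lambda>n. fA xs (indep S) (xs n) = 1) (ufil (Mx U))"
    by (rule eventually_mono) (simp add: fA_xs)
  thus "phi xs U (fA xs (indep S)) = 1" using phi_eq[OF hi tendsto_eventually] by blast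
  have "- indep S \<in> base V" using S(2) unfolding base_def by blast
  then have "- indep S \<in> Mx V" using Mx(1) by (rule subsetD[rotated])
  hence "eventually (\<lambda>n. n \<in> - indep S) (ufil (Mx V))" by (rule ufil_mem)
  hence "eventually (\<lambda>n. fA xs (indep S) (xs n) = 0) (ufil (Mx V))"
    by (rule eventually_mono) (simp add: fA_xs)
  thus "phi xs V (fA xs (indep S)) = 0" using phi_eq[OF hi tendsto_eventually] by blast
qed

theorem theorem4p14:
  assumes "infinite (UNIV :: 'a::metric_space set)"
    and "ulf TYPE('a)"
  shows "\<exists>h :: nat set set \<Rightarrow> (('a \<Rightarrow> complex) \<Rightarrow> complex).
           inj h \<and> range h \<subseteq> higson_corona TYPE('a)"
proof -
  obtain xs :: "nat \<Rightarrow> 'a" where xs: "\<forall>n m. n \<noteq> m \<longrightarrow> dist (xs n) (xs m) \<ge> 2 * (real n + real m + 2)"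
    using sparse_seq[OF assms] by blast
  interpret sparse xs by unfold_locales (use xs in blast)
  show ?thesis
  proof (intro exI[of _ "phi xs"] conjI)
    show "inj (phi xs)"
    proof (rule injI)
      fix U V assume eq: "phi xs U = phi xs V"
      show "U = V"
      proof (rule ccontr)
        assume "U \<noteq> V"
        then obtain S where "(S \<in> U \<and> S \<notin> V) \<or> (S \<in> V \<and> S \<notin> U)" by blast
        then show False
        proof
          assume "S \<in> U \<and> S \<notin> V"
          then show False using phi_sep[OF assms(2), of S U V] eq by simp
        next
          assume "S \<in> V \<and> S \<notin> U"
          then show False using phi_sep[OF assms(2), of S V U] eq by simp
        qed
      qed
    qed
    show "range (phi xs) \<subseteq> higson_corona TYPE('a)"
      unfolding higson_corona_def higson_compactification_def
      using phi_char phi_not_eval by auto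
  qed
qed


end
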